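(* For every integer $t\ge 3$, the set $[3^t+8]$ admits a $3$-good partition; one such partition consists of the pairs $\{i,\ 3^t-i\}$ for $1\le i\le (3^t-1)/2$ with $i\notin\{3,9,11,13\}$, the singletons $\{9\}$ and $\{3^t\}$, and the triples $\{3,11,13\}$, $\{3^t-3,3^t+1,3^t+2\}$, $\{3^t-9,3^t+3,3^t+6\}$, $\{3^t-11,3^t+4,3^t+7\}$, $\{3^t-13,3^t+5,3^t+8\}$.
   Context: A partition of $[n]=\{1,\dots,n\}$ into nonempty parts is called $3$-good if every part has at most $3$ elements and the sum of the elements of every part is a power of $3$, i.e. equals $3^s$ for some integer $s\ge 0$. *)

theory Defs
  imports Main "HOL-Library.Disjoint_Sets"
begin

definition three_good :: "nat \<Rightarrow> nat set set \<Rightarrow> bool" where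
  "three_good n P \<longleftrightarrow> partition_on {1..n} P \<and>
     (\<forall>B\<in>P. card B \<le> 3 \<and> (\<exists>s::nat. \<Sum>B = 3 ^ s))"

end

theory Submission
  imports Defs
begin

definition blk :: "nat \<Rightarrow> nat \<Rightarrow> nat set" where
  "blk N x = (if x = 9 then {9} else if x = N then {N}
     else if x \<in> {3,11,13} then {3,11,13}
     else if x \<in> {N-3,N+1,N+2} then {N-3,N+1,N+2}
     else if x \<in> {N-9,N+3,N+6} then {N-9,N+3,N+6}
     else if x \<in> {N-11,N+4,N+7} then {N-11,N+4,N+7}
     else if x \<in> {N-13,N+5,N+8} then {N-13,N+5,N+8}
     else {x, N - x})"

lemma sp_all:
  assumes "27 \<le> (N::nat)"
  shows "\<And>x. x \<in> {9} \<Longrightarrow> blk N x = {9}"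
    "\<And>x. x \<in> {N} \<Longrightarrow> blk N x = {N}"
    "\<And>x. x \<in> {3,11,13} \<Longrightarrow> blk N x = {3,11,13}"
    "\<And>x. x \<in> {N-3,N+1,N+2} \<Longrightarrow> blk N x = {N-3,N+1,N+2}"
    "\<And>x. x \<in> {N-9,N+3,N+6} \<Longrightarrow> blk N x = {N-9,N+3,N+6}"
    "\<And>x. x \<in> {N-11,N+4,N+7} \<Longrightarrow> blk N x = {N-11,N+4,N+7}"
    "\<And>x. x \<in> {N-13,N+5,N+8} \<Longrightarrow> blk N x = {N-13,N+5,N+8}"
proof -
  obtain M where N: "N = M + 27" using assms le_Suc_ex by (metis add.commute)
  show "\<And>x. x \<in> {9} \<Longrightarrow> blk N x = {9}"
    "\<And>x. x \<in> {N} \<Longrightarrow> blk N x = {N}"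
    "\<And>x. x \<in> {3,11,13} \<Longrightarrow> blk N x = {3,11,13}"
    "\<And>x. x \<in> {N-3,N+1,N+2} \<Longrightarrow> blk N x = {N-3,N+1,N+2}"
    "\<And>x. x \<in> {N-9,N+3,N+6} \<Longrightarrow> blk N x = {N-9,N+3,N+6}"
    "\<And>x. x \<in> {N-11,N+4,N+7} \<Longrightarrow> blk N x = {N-11,N+4,N+7}"
    "\<And>x. x \<in> {N-13,N+5,N+8} \<Longrightarrow> blk N x = {N-13,N+5,N+8}"
    unfolding N insert_iff empty_iff by (elim disjE; simp add: blk_def)+
qed

lemma pr_all:
  assumes "27 \<le> (N::nat)" "odd N" "1 \<le> i" "i \<le> (N - 1) div 2" "i \<notin> {3, 9, 11, 13}" "x \<in> {i, N - i}"
  shows "blk N x = {i, N - i}"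
proof -
  obtain M where N: "N = M + 27" using assms le_Suc_ex by (metis add.commute)
  have h: "2 * i < N" using assms(2,4) by presburger
  define j where "j = N - i"
  have j: "M + 27 = i + j" "i < j" using h N unfolding j_def by linarith+
  have x: "x = i \<or> x = j" using assms(6) j_def by auto
  have i3: "i \<noteq> 3" "i \<noteq> 9" "i \<noteq> 11" "i \<noteq> 13" using assms(5) by auto
  have ij: "i + j = M + 27" "i \<le> M + 13" "14 \<le> j" "j \<le> M + 26" "M + 27 - i = j" "M + 27 - j = i" using j assms(3) by linarith+
  have A: "blk N i = {i, j}"
    unfolding blk_def N using i3 ij assms(3) by simp
  have B: "blk N j = {j, i}"
    unfolding blk_def N using i3 ij by simp
  show ?thesis using x A B j_def by auto
qed
lemma inP_aux:
  fixes N x :: nat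
  assumes N27: "27 \<le> N" and x1: "1 \<le> x" and x2: "x \<le> N + 8"
    and nt: "\<not> (x = 9 \<or> x = N \<or> x \<in> {3,11,13} \<or> x \<in> {N-3,N+1,N+2} \<or> x \<in> {N-9,N+3,N+6}
        \<or> x \<in> {N-11,N+4,N+7} \<or> x \<in> {N-13,N+5,N+8})"
  shows "x < N" "N - x \<notin> {3,9,11,13}"
proof -
  obtain M where N: "N = M + 27" using N27 le_Suc_ex by (metis add.commute)
  have nt': "x \<noteq> 9" "x \<noteq> M + 27" "x \<noteq> 3" "x \<noteq> 11" "x \<noteq> 13"
    "x \<noteq> M + 24" "x \<noteq> M + 28" "x \<noteq> M + 29" "x \<noteq> M + 18" "x \<noteq> M + 30" "x \<noteq> M + 33"
    "x \<noteq> M + 16" "x \<noteq> M + 31" "x \<noteq> M + 34" "x \<noteq> M + 14" "x \<noteq> M + 32" "x \<noteq> M + 35"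
    using nt unfolding N by (simp_all add: add.commute)
  show xN: "x < N"
  proof (rule ccontr)
    assume "\<not> x < N"
    then obtain k where k: "x = M + 27 + k" unfolding N using le_Suc_ex by (metis not_less)
    have "k < 9" using x2 k N by simp
    moreover have "k \<noteq> 0" "k \<noteq> 1" "k \<noteq> 2" "k \<noteq> 3" "k \<noteq> 4" "k \<noteq> 5" "k \<noteq> 6" "k \<noteq> 7" "k \<noteq> 8"
      using nt' unfolding k by simp_all
    ultimately show False by presburger
  qed
  define y where "y = N - x"
  have xy: "x + y = M + 27" using xN N y_def by simp
  show "N - x \<notin> {3,9,11,13}"
    unfolding y_def[symmetric] using xy nt' by auto
qed

lemma tri_sums:
  fixes N :: nat assumes "27 \<le> N"
  shows "\<Sum>{N-3,N+1,N+2} = 3 * N" "\<Sum>{N-9,N+3,N+6} = 3 * N"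
    "\<Sum>{N-11,N+4,N+7} = 3 * N" "\<Sum>{N-13,N+5,N+8} = 3 * N"
proof -
  obtain M where N: "N = M + 27" using assms le_Suc_ex by (metis add.commute)
  show "\<Sum>{N-3,N+1,N+2} = 3 * N" "\<Sum>{N-9,N+3,N+6} = 3 * N"
    "\<Sum>{N-11,N+4,N+7} = 3 * N" "\<Sum>{N-13,N+5,N+8} = 3 * N"
    unfolding N by simp_all
qed

lemma main_gen:
  fixes N :: nat
  assumes N27: "27 \<le> N" and odd: "odd N"
  defines "P \<equiv> {{i, N - i} | i. 1 \<le> i \<and> i \<le> (N - 1) div 2 \<and> i \<notin> {3, 9, 11, 13}}
       \<union> {{9}, {N}, {3, 11, 13},
          {N - 3, N + 1, N + 2}, {N - 9, N + 3, N + 6},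
          {N - 11, N + 4, N + 7}, {N - 13, N + 5, N + 8}}"
  shows "partition_on {1..N+8} P" "\<And>B. B \<in> P \<Longrightarrow> card B \<le> 3"
    "\<And>B. B \<in> P \<Longrightarrow> \<Sum>B = N \<or> \<Sum>B = 9 \<or> \<Sum>B = 27 \<or> \<Sum>B = 3 * N"
proof -
  note sp = sp_all[OF N27]
  note pr = pr_all[OF N27 odd]
  have PD: "\<And>B. B \<in> P \<Longrightarrow> (\<exists>i. B = {i, N - i} \<and> 1 \<le> i \<and> i \<le> (N - 1) div 2 \<and> i \<notin> {3, 9, 11, 13})
      \<or> B = {9} \<or> B = {N} \<or> B = {3,11,13} \<or> B = {N-3,N+1,N+2}
      \<or> B = {N-9,N+3,N+6} \<or> B = {N-11,N+4,N+7} \<or> B = {N-13,N+5,N+8}"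
      unfolding P_def Un_iff mem_Collect_eq
      by (simp only: insert_iff empty_iff simp_thms)
  have pairP: "\<And>i. 1 \<le> i \<Longrightarrow> i \<le> (N - 1) div 2 \<Longrightarrow> i \<notin> {3, 9, 11, 13} \<Longrightarrow> {i, N - i} \<in> P"
    unfolding P_def by (rule UnI1) blast
  have E: "{{9}, {N}, {3, 11, 13},
          {N - 3, N + 1, N + 2}, {N - 9, N + 3, N + 6},
          {N - 11, N + 4, N + 7}, {N - 13, N + 5, N + 8}} \<subseteq> P" unfolding P_def by (rule Un_upper2)
  have key: "\<And>B x. B \<in> P \<Longrightarrow> x \<in> B \<Longrightarrow> blk N x = B"
  proof -
    fix B x assume B: "B \<in> P" and x: "x \<in> B"
    note D = PD[OF B]
    from D show "blk N x = B"
    proof (elim disjE exE conjE)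
      fix i assume "B = {i, N - i}" "1 \<le> i" "i \<le> (N - 1) div 2" "i \<notin> {3, 9, 11, 13}"
      then show ?thesis using pr x by simp
    qed (use sp x in simp_all)
  qed
  have inP: "\<And>x. x \<in> {1..N+8} \<Longrightarrow> blk N x \<in> P \<and> x \<in> blk N x"
  proof -
    fix x assume x: "x \<in> {1..N+8}"
    show "blk N x \<in> P \<and> x \<in> blk N x"
    proof (cases "x = 9 \<or> x = N \<or> x \<in> {3,11,13} \<or> x \<in> {N-3,N+1,N+2} \<or> x \<in> {N-9,N+3,N+6}
        \<or> x \<in> {N-11,N+4,N+7} \<or> x \<in> {N-13,N+5,N+8}")
      case True
      from True show ?thesis
        using sp[of x] E by (elim disjE) (simp_all only: singleton_iff insert_iff insert_subset, simp_all)
    next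
      case False
      then have b: "blk N x = {x, N - x}" unfolding blk_def by (simp only: de_Morgan_disj if_False)
      have xN: "x < N" and nx: "N - x \<notin> {3,9,11,13}" using inP_aux[OF N27 _ _ False] x by auto
      show ?thesis
      proof (cases "x \<le> (N - 1) div 2")
        case True
        have "x \<notin> {3, 9, 11, 13}" using False by simp
        then have "{x, N - x} \<in> P" using pairP x True by simp
        then show ?thesis using b by simp
      next
        case c: False
        have nn: "N - (N - x) = x" using xN by simp
        have e: "{x, N - x} = {N - x, N - (N - x)}" unfolding nn by auto
        note nx
        moreover have "N - x \<le> (N - 1) div 2" "1 \<le> N - x" using c xN odd by (auto, presburger)
        ultimately have "{N - x, N - (N - x)} \<in> P" using pairP by blast
        then show ?thesis using b e nn by simp
      qed
    qed
  qed
  have sub: "\<And>B. B \<in> P \<Longrightarrow> B \<subseteq> {1..N+8}"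
    unfolding P_def using N27 by auto
  show "partition_on {1..N+8} P"
  proof (rule partition_onI)
    show "\<Union>P = {1..N+8}" using sub inP by blast
  next
    fix p q assume "p \<in> P" "q \<in> P" "p \<noteq> q"
    then show "disjnt p q" using key unfolding disjnt_def by blast
  next
    show "{} \<notin> P" unfolding P_def by auto
  qed
  show "\<And>B. B \<in> P \<Longrightarrow> card B \<le> 3"
  proof -
    fix B assume "B \<in> P"
    from PD[OF this] show "card B \<le> 3"
    proof (elim disjE exE conjE)
      fix i assume "B = {i, N - i}" then show ?thesis by (simp add: card_insert_if)
    qed (simp_all add: card_insert_if)
  qed
  show "\<And>B. B \<in> P \<Longrightarrow> \<Sum>B = N \<or> \<Sum>B = 9 \<or> \<Sum>B = 27 \<or> \<Sum>B = 3 * N"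
  proof -
    fix B assume "B \<in> P"
    from PD[OF this] show "\<Sum>B = N \<or> \<Sum>B = 9 \<or> \<Sum>B = 27 \<or> \<Sum>B = 3 * N"
    proof (elim disjE exE conjE)
      fix i assume B: "B = {i, N - i}" and i: "i \<le> (N - 1) div 2"
      have "2 * i < N" using i odd by presburger
      then show ?thesis using B by simp
    qed (use tri_sums[OF N27] in simp_all)
  qed
qed

theorem mainTheorem11:
  fixes t :: nat
  assumes "t \<ge> 3"
  shows "(\<exists>P. three_good (3 ^ t + 8) P) \<and>
    three_good (3 ^ t + 8)
      ({{i, 3 ^ t - i} | i. 1 \<le> i \<and> i \<le> (3 ^ t - 1) div 2 \<and> i \<notin> {3, 9, 11, 13}}
       \<union> {{9}, {3 ^ t}, {3, 11, 13},
          {3 ^ t - 3, 3 ^ t + 1, 3 ^ t + 2}, {3 ^ t - 9, 3 ^ t + 3, 3 ^ t + 6},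
          {3 ^ t - 11, 3 ^ t + 4, 3 ^ t + 7}, {3 ^ t - 13, 3 ^ t + 5, 3 ^ t + 8}})"
proof -
  have "(3::nat)^3 \<le> 3^t" using assms by (intro power_increasing) auto
  then have N27: "27 \<le> (3::nat)^t" by simp
  have odd: "odd ((3::nat)^t)" by simp
  note m = main_gen[OF N27 odd]
  have G: "three_good (3 ^ t + 8)
      ({{i, 3 ^ t - i} | i. 1 \<le> i \<and> i \<le> (3 ^ t - 1) div 2 \<and> i \<notin> {3, 9, 11, 13}}
       \<union> {{9}, {3 ^ t}, {3, 11, 13},
          {3 ^ t - 3, 3 ^ t + 1, 3 ^ t + 2}, {3 ^ t - 9, 3 ^ t + 3, 3 ^ t + 6},
          {3 ^ t - 11, 3 ^ t + 4, 3 ^ t + 7}, {3 ^ t - 13, 3 ^ t + 5, 3 ^ t + 8}})"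
    unfolding three_good_def
  proof (intro conjI ballI)
    fix B :: "nat set" assume B: "B \<in> {{i, 3 ^ t - i} | i. 1 \<le> i \<and> i \<le> (3 ^ t - 1) div 2 \<and> i \<notin> {3, 9, 11, 13}}
       \<union> {{9}, {3 ^ t}, {3, 11, 13},
          {3 ^ t - 3, 3 ^ t + 1, 3 ^ t + 2}, {3 ^ t - 9, 3 ^ t + 3, 3 ^ t + 6},
          {3 ^ t - 11, 3 ^ t + 4, 3 ^ t + 7}, {3 ^ t - 13, 3 ^ t + 5, 3 ^ t + 8}}"
    show "card B \<le> 3" using m(2)[OF B] .
    have "\<Sum>B = 3^t \<or> \<Sum>B = 3^2 \<or> \<Sum>B = 3^3 \<or> \<Sum>B = 3^(Suc t)" using m(3)[OF B] by simp
    then show "\<exists>s::nat. \<Sum>B = 3 ^ s" by blast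
  qed (use m(1) in simp)
  then show ?thesis by blast
qed

end
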